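(* Consider periods $t=0,1,\dots,T$ with treatment statuses $D_0,D_1,\dots,D_T\in\{0,1\}$, $D_0=0$, observed outcomes $Y_t$ and potential outcomes $Y_t(0,d_1,\dots,d_T)$ for each path $(0,d_1,\dots,d_T)\in\{0\}\times\{0,1\}^T$, such that $$Y_t=\sum_{(d_1,\dots,d_T)\in\{0,1\}^T}Y_t(0,d_1,\dots,d_T)\,\mathbf 1\{D_0=0,D_1=d_1,\dots,D_T=d_T\},$$ and let $\mathcal I_0$ be a set of pre-treatment periods $\iota_0$, in each of which the outcome equals the untreated potential outcome $Y_{\iota_0}(0)$ for all units. Fix two paths $\mathbf d=(0,d_1,\dots,d_T)$ and $\mathbf d'=(0,d'_1,\dots,d'_T)$ and write $\mathbf D=(D_0,\dots,D_T)$. For $t\ge1$ define $$ATT_t=\mathbb E[Y_t(\mathbf d)-Y_t(\mathbf d')\mid \mathbf D=\mathbf d],\qquad \theta^t_{DIM}=\mathbb E[Y_t\mid \mathbf D=\mathbf d]-\mathbb E[Y_t\mid \mathbf D=\mathbf d'],$$ $$SB_t=\mathbb E[Y_t(\mathbf d')\mid \mathbf D=\mathbf d]-\mathbb E[Y_t(\mathbf d')\mid \mathbf D=\mathbf d'],$$ and for $\iota_0\in\mathcal I_0$, $$SB_{\iota_0}=\mathbb E[Y_{\iota_0}(0)\mid \mathbf D=\mathbf d]-\mathbb E[Y_{\iota_0}(0)\mid \mathbf D=\mathbf d'].$$ Assume (extended bias set stability) that for each $t$, $SB_t\in\big[\inf_{\iota_0\in\mathcal I_0}SB_{\iota_0},\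 \sup_{\iota_0\in\mathcal I_0}SB_{\iota_0}\big]$. Then $$ATT_t\in\Big[\theta^t_{DIM}-\sup_{\iota_0\in\mathcal I_0}SB_{\iota_0},\ \theta^t_{DIM}-\inf_{\iota_0\in\mathcal I_0}SB_{\iota_0}\Big]\equiv\Theta_I^t,$$ and these bounds are sharp: $\Theta_I^t$ is the identified set for $ATT_t$, i.e. every value in $\Theta_I^t$ is attained by some joint distribution of latent and observed variables consistent with the observed data distribution and the assumptions.
   Context: All conditional expectations are assumed to exist, and the conditioning events $\{\mathbf D=\mathbf d\}$, $\{\mathbf D=\mathbf d'\}$ have positive probability. $ATT_t$ is the average effect in period $t$, for units following path $\mathbf d$, of following $\mathbf d$ rather than $\mathbf d'$. *)

theory Defs
  imports "HOL-Probability.Probability"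
begin

text \<open>Treatment paths (0,d_1,...,d_T) are encoded as functions nat => bool with
  d 0 = False and d s = False for s > T (canonical representative).
  Periods of outcomes are integers; the post-treatment periods are 1..T.\<close>

definition is_path :: "nat \<Rightarrow> (nat \<Rightarrow> bool) \<Rightarrow> bool" where
  "is_path T d \<longleftrightarrow> d 0 = False \<and> (\<forall>s>T. d s = False)"

definition zero_path :: "nat \<Rightarrow> bool" where
  "zero_path = (\<lambda>_. False)"

definition Dpath :: "nat \<Rightarrow> (nat \<Rightarrow> 'a \<Rightarrow> bool) \<Rightarrow> 'a \<Rightarrow> nat \<Rightarrow> bool" where
  "Dpath T D \<omega> = (\<lambda>s. if s \<le> T then D s \<omega> else False)"

definition path_event :: "'a measure \<Rightarrow> nat \<Rightarrow> (nat \<Rightarrow> 'a \<Rightarrow> bool) \<Rightarrow> (nat \<Rightarrow> bool) \<Rightarrow> 'a set" where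
  "path_event M T D d = {\<omega> \<in> space M. \<forall>s\<le>T. D s \<omega> = d s}"

definition cexp :: "'a measure \<Rightarrow> ('a \<Rightarrow> real) \<Rightarrow> 'a set \<Rightarrow> real" where
  "cexp M X A = (LINT \<omega>:A|M. X \<omega>) / measure M A"

definition ATT :: "'a measure \<Rightarrow> nat \<Rightarrow> (nat \<Rightarrow> 'a \<Rightarrow> bool) \<Rightarrow> (int \<Rightarrow> (nat \<Rightarrow> bool) \<Rightarrow> 'a \<Rightarrow> real)
    \<Rightarrow> (nat \<Rightarrow> bool) \<Rightarrow> (nat \<Rightarrow> bool) \<Rightarrow> int \<Rightarrow> real" where
  "ATT M T D Yp d d' t = cexp M (\<lambda>\<omega>. Yp t d \<omega> - Yp t d' \<omega>) (path_event M T D d)"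

definition theta_DIM :: "'a measure \<Rightarrow> nat \<Rightarrow> (nat \<Rightarrow> 'a \<Rightarrow> bool) \<Rightarrow> (int \<Rightarrow> 'a \<Rightarrow> real)
    \<Rightarrow> (nat \<Rightarrow> bool) \<Rightarrow> (nat \<Rightarrow> bool) \<Rightarrow> int \<Rightarrow> real" where
  "theta_DIM M T D Y d d' t = cexp M (Y t) (path_event M T D d) - cexp M (Y t) (path_event M T D d')"

definition SB_post :: "'a measure \<Rightarrow> nat \<Rightarrow> (nat \<Rightarrow> 'a \<Rightarrow> bool) \<Rightarrow> (int \<Rightarrow> (nat \<Rightarrow> bool) \<Rightarrow> 'a \<Rightarrow> real)
    \<Rightarrow> (nat \<Rightarrow> bool) \<Rightarrow> (nat \<Rightarrow> bool) \<Rightarrow> int \<Rightarrow> real" where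
  "SB_post M T D Yp d d' t = cexp M (Yp t d') (path_event M T D d) - cexp M (Yp t d') (path_event M T D d')"

definition SB_pre :: "'a measure \<Rightarrow> nat \<Rightarrow> (nat \<Rightarrow> 'a \<Rightarrow> bool) \<Rightarrow> (int \<Rightarrow> (nat \<Rightarrow> bool) \<Rightarrow> 'a \<Rightarrow> real)
    \<Rightarrow> (nat \<Rightarrow> bool) \<Rightarrow> (nat \<Rightarrow> bool) \<Rightarrow> int \<Rightarrow> real" where
  "SB_pre M T D Yp d d' i = cexp M (Yp i zero_path) (path_event M T D d) - cexp M (Yp i zero_path) (path_event M T D d')"

definition dgp :: "'a measure \<Rightarrow> nat \<Rightarrow> int set \<Rightarrow> (nat \<Rightarrow> 'a \<Rightarrow> bool) \<Rightarrow> (int \<Rightarrow> 'a \<Rightarrow> real)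
    \<Rightarrow> (int \<Rightarrow> (nat \<Rightarrow> bool) \<Rightarrow> 'a \<Rightarrow> real) \<Rightarrow> (nat \<Rightarrow> bool) \<Rightarrow> (nat \<Rightarrow> bool) \<Rightarrow> bool" where
  "dgp M T I0 D Y Yp d d' \<longleftrightarrow>
     prob_space M \<and>
     (\<forall>s\<le>T. D s \<in> measurable M (count_space UNIV)) \<and>
     (\<forall>t. Y t \<in> borel_measurable M) \<and>
     (\<forall>\<omega>\<in>space M. D 0 \<omega> = False) \<and>
     (\<forall>t. \<forall>\<omega>\<in>space M. Y t \<omega> = Yp t (Dpath T D \<omega>) \<omega>) \<and>
     (\<forall>i\<in>I0. \<forall>\<omega>\<in>space M. Y i \<omega> = Yp i zero_path \<omega>) \<and>
     measure M (path_event M T D d) > 0 \<and> measure M (path_event M T D d') > 0 \<and>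
     (\<forall>t\<in>{1..int T}. integrable M (Y t) \<and> integrable M (Yp t d) \<and> integrable M (Yp t d')) \<and>
     (\<forall>i\<in>I0. integrable M (Y i))"

definition ESB :: "'a measure \<Rightarrow> nat \<Rightarrow> int set \<Rightarrow> (nat \<Rightarrow> 'a \<Rightarrow> bool)
    \<Rightarrow> (int \<Rightarrow> (nat \<Rightarrow> bool) \<Rightarrow> 'a \<Rightarrow> real) \<Rightarrow> (nat \<Rightarrow> bool) \<Rightarrow> (nat \<Rightarrow> bool) \<Rightarrow> bool" where
  "ESB M T I0 D Yp d d' \<longleftrightarrow>
     (\<forall>t\<in>{1..int T}. SB_post M T D Yp d d' t \<in>
        {Inf (SB_pre M T D Yp d d' ` I0) .. Sup (SB_pre M T D Yp d d' ` I0)})"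

definition obs :: "nat \<Rightarrow> int set \<Rightarrow> (nat \<Rightarrow> 'a \<Rightarrow> bool) \<Rightarrow> (int \<Rightarrow> 'a \<Rightarrow> real)
    \<Rightarrow> 'a \<Rightarrow> (nat \<Rightarrow> bool) \<times> (int \<Rightarrow> real)" where
  "obs T I0 D Y \<omega> = (restrict (\<lambda>s. D s \<omega>) {..T}, restrict (\<lambda>t. Y t \<omega>) (I0 \<union> {0..int T}))"

definition obs_space :: "nat \<Rightarrow> int set \<Rightarrow> ((nat \<Rightarrow> bool) \<times> (int \<Rightarrow> real)) measure" where
  "obs_space T I0 = (\<Pi>\<^sub>M s\<in>{..T}. count_space UNIV) \<Otimes>\<^sub>M (\<Pi>\<^sub>M t\<in>I0 \<union> {0..int T}. borel)"

end

theory Submission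
  imports Defs
begin

lemma pe_sets:
  assumes "dgp M T I0 D Y Yp d d'"
  shows "path_event M T D p \<in> sets M"
proof -
  have m: "\<forall>s\<le>T. D s \<in> measurable M (count_space UNIV)"
    using assms unfolding dgp_def by blast
  have "{x\<in>space M. D s x = p s} \<in> sets M" if "s \<in> {..T}" for s
  proof -
    have ms: "D s \<in> measurable M (count_space UNIV)" using m that by simp
    have "D s -` {p s} \<inter> space M \<in> sets M"
      by (rule measurable_sets[OF ms]) simp
    moreover have "D s -` {p s} \<inter> space M = {x\<in>space M. D s x = p s}" by blast
    ultimately show ?thesis by simp
  qed
  then have "{x\<in>space M. \<forall>s\<in>{..T}. D s x = p s} \<in> sets M"
    by (rule sets.sets_Collect_finite_All) (assumption, rule finite_atMost)
  moreover have "path_event M T D p = {x\<in>space M. \<forall>s\<in>{..T}. D s x = p s}"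
    unfolding path_event_def by auto
  ultimately show ?thesis by simp
qed

lemma pe_Dpath:
  assumes "is_path T p" "\<omega> \<in> path_event M T D p"
  shows "Dpath T D \<omega> = p"
proof
  fix s
  show "Dpath T D \<omega> s = p s"
  proof (cases "s \<le> T")
    case True then show ?thesis using assms(2) unfolding path_event_def Dpath_def by auto
  next
    case False then show ?thesis using assms(1) unfolding is_path_def Dpath_def by auto
  qed
qed

lemma Dpath_pe:
  assumes "Dpath T D \<omega> = p" "\<omega> \<in> space M"
  shows "\<omega> \<in> path_event M T D p"
  using assms unfolding path_event_def Dpath_def by auto

lemma si:
  fixes f :: "'a \<Rightarrow> real"
  assumes "A \<in> sets M" "integrable M f"
  shows "set_integrable M A f"
  unfolding set_integrable_def using integrable_mult_indicator[OF assms] .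

lemma ident:
  assumes dg: "dgp M T I0 D Y Yp d d'"
    and pd: "is_path T d" and pd': "is_path T d'"
    and t: "t \<in> {1..int T}"
  shows "ATT M T D Yp d d' t = theta_DIM M T D Y d d' t - SB_post M T D Yp d d' t"
proof -
  let ?A = "path_event M T D d" and ?B = "path_event M T D d'"
  have A: "?A \<in> sets M" and B: "?B \<in> sets M" using pe_sets[OF dg] by auto
  have i1: "integrable M (Yp t d)" and i2: "integrable M (Yp t d')"
    using dg t unfolding dgp_def by auto
  have cons: "\<forall>\<omega>\<in>space M. Y t \<omega> = Yp t (Dpath T D \<omega>) \<omega>" using dg unfolding dgp_def by auto
  have eA: "(LINT x:?A|M. Y t x) = (LINT x:?A|M. Yp t d x)"
  proof (rule set_lebesgue_integral_cong[OF A], intro allI impI)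
    fix x assume x: "x \<in> path_event M T D d"
    then have "x \<in> space M" unfolding path_event_def by auto
    then show "Y t x = Yp t d x" using cons pe_Dpath[OF pd x] by simp
  qed
  have eB: "(LINT x:?B|M. Y t x) = (LINT x:?B|M. Yp t d' x)"
  proof (rule set_lebesgue_integral_cong[OF B], intro allI impI)
    fix x assume x: "x \<in> path_event M T D d'"
    then have "x \<in> space M" unfolding path_event_def by auto
    then show "Y t x = Yp t d' x" using cons pe_Dpath[OF pd' x] by simp
  qed
  have "(LINT x:?A|M. Yp t d x - Yp t d' x) = (LINT x:?A|M. Yp t d x) - (LINT x:?A|M. Yp t d' x)"
    using si[OF A i1] si[OF A i2] by simp
  then show ?thesis
    unfolding ATT_def theta_DIM_def SB_post_def cexp_def eA eB
    by (simp add: diff_divide_distrib)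
qed

theorem proposition6:
  fixes M :: "'a measure" and T :: nat and I0 :: "int set"
    and D :: "nat \<Rightarrow> 'a \<Rightarrow> bool" and Y :: "int \<Rightarrow> 'a \<Rightarrow> real"
    and Yp :: "int \<Rightarrow> (nat \<Rightarrow> bool) \<Rightarrow> 'a \<Rightarrow> real"
    and d d' :: "nat \<Rightarrow> bool" and t :: int
  assumes "dgp M T I0 D Y Yp d d'"
    and "is_path T d" and "is_path T d'"
    and "I0 \<noteq> {}" and "I0 \<subseteq> {..0}"
    and "bdd_above (SB_pre M T D Yp d d' ` I0)" and "bdd_below (SB_pre M T D Yp d d' ` I0)"
    and "ESB M T I0 D Yp d d'"
    and "t \<in> {1..int T}"
  shows "ATT M T D Yp d d' t \<in>
           {theta_DIM M T D Y d d' t - Sup (SB_pre M T D Yp d d' ` I0) ..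
            theta_DIM M T D Y d d' t - Inf (SB_pre M T D Yp d d' ` I0)}
       \<and> (\<forall>\<theta> \<in> {theta_DIM M T D Y d d' t - Sup (SB_pre M T D Yp d d' ` I0) ..
                 theta_DIM M T D Y d d' t - Inf (SB_pre M T D Yp d d' ` I0)}.
            \<exists>(M' :: 'a measure) D' Y' Yp'.
              dgp M' T I0 D' Y' Yp' d d' \<and> ESB M' T I0 D' Yp' d d' \<and>
              distr M' (obs_space T I0) (obs T I0 D' Y') = distr M (obs_space T I0) (obs T I0 D Y) \<and>
              ATT M' T D' Yp' d d' t = \<theta>)"
proof
  note dg = assms(1) and pd = assms(2) and pd' = assms(3) and tt = assms(9)
  let ?S = "SB_pre M T D Yp d d' ` I0"
  have idt: "ATT M T D Yp d d' t = theta_DIM M T D Y d d' t - SB_post M T D Yp d d' t"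
    by (rule ident[OF dg pd pd' tt])
  have sb: "SB_post M T D Yp d d' t \<in> {Inf ?S .. Sup ?S}"
    using assms(8) tt unfolding ESB_def by blast
  show "ATT M T D Yp d d' t \<in> {theta_DIM M T D Y d d' t - Sup ?S .. theta_DIM M T D Y d d' t - Inf ?S}"
    using idt sb by auto
  show "\<forall>\<theta> \<in> {theta_DIM M T D Y d d' t - Sup ?S .. theta_DIM M T D Y d d' t - Inf ?S}.
            \<exists>(M' :: 'a measure) D' Y' Yp'.
              dgp M' T I0 D' Y' Yp' d d' \<and> ESB M' T I0 D' Yp' d d' \<and>
              distr M' (obs_space T I0) (obs T I0 D' Y') = distr M (obs_space T I0) (obs T I0 D Y) \<and>
              ATT M' T D' Yp' d d' t = \<theta>"
  proof
    fix \<theta> assume th: "\<theta> \<in> {theta_DIM M T D Y d d' t - Sup ?S .. theta_DIM M T D Y d d' t - Inf ?S}"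
    show "\<exists>(M' :: 'a measure) D' Y' Yp'.
              dgp M' T I0 D' Y' Yp' d d' \<and> ESB M' T I0 D' Yp' d d' \<and>
              distr M' (obs_space T I0) (obs T I0 D' Y') = distr M (obs_space T I0) (obs T I0 D Y) \<and>
              ATT M' T D' Yp' d d' t = \<theta>"
    proof (cases "d = d'")
      case True
      have "?S = {0}" using assms(4) True unfolding SB_pre_def by auto
      moreover have "theta_DIM M T D Y d d' t = 0" using True unfolding theta_DIM_def by simp
      moreover have "ATT M T D Yp d d' t = 0" using True unfolding ATT_def cexp_def by simp
      ultimately have "ATT M T D Yp d d' t = \<theta>" using th by simp
      then show ?thesis using dg assms(8) by blast
    next
      case False
      let ?A = "path_event M T D d" and ?B = "path_event M T D d'"
      define c where "c = ATT M T D Yp d d' t - \<theta>"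
      define Yq where "Yq = (\<lambda>s p. if s = t \<and> p = d' then (\<lambda>\<omega>. Yp t d' \<omega> + c * indicator ?A \<omega>) else Yp s p)"
      have A: "?A \<in> sets M" using pe_sets[OF dg] by auto
      have ps: "prob_space M" using dg unfolding dgp_def by auto
      have fm: "finite_measure M" using ps unfolding prob_space_def by simp
      have finA: "emeasure M ?A \<noteq> \<infinity>" using ps unfolding prob_space_def by (simp add: finite_measure.emeasure_finite)
      obtain s where s: "s \<le> T" "d s \<noteq> d' s"
      proof -
        obtain s where s0: "d s \<noteq> d' s" using False by (auto simp: fun_eq_iff)
        have "s \<le> T"
        proof (rule ccontr)
          assume "\<not> s \<le> T" then have "s > T" by simp
          then show False using s0 pd pd' unfolding is_path_def by simp
        qed
        then show thesis using s0 that by blast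
      qed
      have disj: "\<omega> \<notin> ?B" if "\<omega> \<in> ?A" for \<omega>
        using that s unfolding path_event_def by auto
      have Yq_other: "Yq i p = Yp i p" if "i \<noteq> t" for i p using that unfolding Yq_def by auto
      have Yq_d: "Yq i d = Yp i d" for i using False unfolding Yq_def by auto
      have I0t: "i \<noteq> t" if "i \<in> I0" for i using that assms(5) tt by auto
      have dgq: "dgp M T I0 D Y Yq d d'"
        unfolding dgp_def
      proof (intro conjI)
        show "\<forall>ta. \<forall>\<omega>\<in>space M. Y ta \<omega> = Yq ta (Dpath T D \<omega>) \<omega>"
        proof (intro allI ballI)
          fix ta \<omega> assume w: "\<omega> \<in> space M"
          have "Y ta \<omega> = Yp ta (Dpath T D \<omega>) \<omega>" using dg w unfolding dgp_def by auto
          moreover have "Yp ta (Dpath T D \<omega>) \<omega> = Yq ta (Dpath T D \<omega>) \<omega>"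
          proof (cases "ta = t \<and> Dpath T D \<omega> = d'")
            case True
            then have "\<omega> \<in> ?B" using Dpath_pe w by metis
            then have "\<omega> \<notin> ?A" using disj by blast
            then show ?thesis using True unfolding Yq_def by auto
          next
            case False then show ?thesis unfolding Yq_def by auto
          qed
          ultimately show "Y ta \<omega> = Yq ta (Dpath T D \<omega>) \<omega>" by simp
        qed
        show "\<forall>i\<in>I0. \<forall>\<omega>\<in>space M. Y i \<omega> = Yq i zero_path \<omega>"
          using dg I0t Yq_other unfolding dgp_def by auto
        show "\<forall>ta\<in>{1..int T}. integrable M (Y ta) \<and> integrable M (Yq ta d) \<and> integrable M (Yq ta d')"
        proof
          fix ta assume ta: "ta \<in> {1..int T}"
          have i: "integrable M (Y ta)" "integrable M (Yp ta d)" "integrable M (Yp ta d')"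
            using dg ta unfolding dgp_def by auto
          have "integrable M (\<lambda>\<omega>. Yp t d' \<omega> + c * indicator ?A \<omega>)" if "ta = t"
          proof -
            have "integrable M (indicat_real ?A)" using A finA by (intro integrable_real_indicator) (auto simp: top.not_eq_extremum)
            then have "integrable M (\<lambda>\<omega>. c * indicat_real ?A \<omega>)" by (rule integrable_mult_right)
            moreover have "integrable M (Yp t d')" using i that by simp
            ultimately show ?thesis by (intro Bochner_Integration.integrable_add) auto
          qed
          then show "integrable M (Y ta) \<and> integrable M (Yq ta d) \<and> integrable M (Yq ta d')"
            using i Yq_d unfolding Yq_def by auto
        qed
      qed (use dg in \<open>auto simp: dgp_def\<close>)
      have preq: "SB_pre M T D Yq d d' i = SB_pre M T D Yp d d' i" if "i \<in> I0" for i
        unfolding SB_pre_def using Yq_other[OF I0t[OF that]] by simp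
      then have Seq: "SB_pre M T D Yq d d' ` I0 = ?S" by (auto simp: image_def)
      have i1: "integrable M (Yp t d)" and i2: "integrable M (Yp t d')"
        using dg tt unfolding dgp_def by auto
      have posA: "measure M ?A > 0" using dg unfolding dgp_def by auto
      have "(LINT x:?A|M. Yq t d x - Yq t d' x) = (LINT x:?A|M. (Yp t d x - Yp t d' x) - c)"
        apply (rule set_lebesgue_integral_cong[OF A])
        using Yq_d False unfolding Yq_def by auto
      also have "\<dots> = (LINT x:?A|M. (Yp t d x - Yp t d' x)) - (LINT x:?A|M. c)"
        using si[OF A i1] si[OF A i2] si[OF A finite_measure.integrable_const[OF fm, of c]]
        by (intro set_integral_diff) auto
      also have "(LINT x:?A|M. c) = measure M ?A * c" using set_integral_const[OF A finA, of c] by simp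
      finally have "ATT M T D Yq d d' t = ATT M T D Yp d d' t - c"
        unfolding ATT_def cexp_def using posA by (simp add: field_simps)
      then have attq: "ATT M T D Yq d d' t = \<theta>" unfolding c_def by simp
      have tdq: "SB_post M T D Yq d d' t = theta_DIM M T D Y d d' t - \<theta>"
        using ident[OF dgq pd pd' tt] attq by simp
      have esbq: "ESB M T I0 D Yq d d'"
        unfolding ESB_def Seq
      proof
        fix ta assume ta: "ta \<in> {1..int T}"
        show "SB_post M T D Yq d d' ta \<in> {Inf ?S .. Sup ?S}"
        proof (cases "ta = t")
          case True then show ?thesis using tdq th by auto
        next
          case False
          then have "SB_post M T D Yq d d' ta = SB_post M T D Yp d d' ta"
            unfolding SB_post_def using Yq_other by simp
          then show ?thesis using assms(8) ta unfolding ESB_def by auto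
        qed
      qed
      show ?thesis using dgq esbq attq by blast
    qed
  qed
qed

end
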